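(* Let $(S_n)_{n\in\mathbb{N}}$ be a simple random walk on $\mathbb{Z}$ with constant transition probability $p\equiv\overline{p}\in(0,1)$, $\overline{p}\neq\frac12$ (i.e. i.i.d. steps equal to $+1$ with probability $\overline{p}$ and $-1$ with probability $1-\overline{p}$). Then there exists a bounded function $f:\mathbb{Z}\to\mathbb{R}$ such that the sequence $\ell_n(f)=\frac1n\sum_{j=1}^n f(S_j)$, $n\in\mathbb{N}$, does not satisfy a large deviation principle.
   Context: A sequence of real random variables $(X_n)$ satisfies a large deviation principle if there is a lower semicontinuous $J:\mathbb{R}\to[0,\infty]$ with $-\inf_U J\le\liminf_n\frac1n\log\mathbb{P}(X_n\in U)$ for all open $U$ and $\limsup_n\frac1n\log\mathbb{P}(X_n\in F)\le-\inf_F J$ for all closed $F$. The walk starts at $S_1=0$. *)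

theory Defs
  imports "HOL-Probability.Probability"
begin

definition lower_semicont :: "(real \<Rightarrow> ereal) \<Rightarrow> bool" where
  "lower_semicont J \<longleftrightarrow> (\<forall>c::ereal. closed {x. J x \<le> c})"

definition eln :: "real \<Rightarrow> ereal" where
  "eln q = (if q = 0 then -\<infinity> else ereal (ln q))"

definition satisfies_LDP :: "'a measure \<Rightarrow> (nat \<Rightarrow> 'a \<Rightarrow> real) \<Rightarrow> bool" where
  "satisfies_LDP M Y \<longleftrightarrow>
     (\<exists>J :: real \<Rightarrow> ereal. lower_semicont J \<and> (\<forall>x. 0 \<le> J x) \<and>
       (\<forall>U. open U \<longrightarrow>
          - (INF x\<in>U. J x) \<le>
            liminf (\<lambda>n. ereal (1 / real n) * eln (measure M {\<omega> \<in> space M. Y n \<omega> \<in> U}))) \<and>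
       (\<forall>F. closed F \<longrightarrow>
          limsup (\<lambda>n. ereal (1 / real n) * eln (measure M {\<omega> \<in> space M. Y n \<omega> \<in> F}))
            \<le> - (INF x\<in>F. J x)))"

text \<open>Simple random walk started at S_1 = 0 with steps X 1, X 2, ...:
  S_j = X 1 + ... + X (j-1).\<close>
definition walk :: "(nat \<Rightarrow> 'a \<Rightarrow> int) \<Rightarrow> nat \<Rightarrow> 'a \<Rightarrow> int" where
  "walk X j \<omega> = (\<Sum>i\<in>{1..<j}. X i \<omega>)"

definition empirical_avg :: "(int \<Rightarrow> real) \<Rightarrow> (nat \<Rightarrow> 'a \<Rightarrow> int) \<Rightarrow> nat \<Rightarrow> 'a \<Rightarrow> real" where
  "empirical_avg f X n \<omega> = (1 / real n) * (\<Sum>j=1..n. f (walk X j \<omega>))"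

end

theory Submission imports Defs "HOL-Real_Asymp.Real_Asymp" begin

lemma ev1: fixes e::real assumes "e > 0"
  shows "eventually (\<lambda>n::nat. ln (2 * real n) / real n + e / real n \<le> e / 16) at_top"
  using assms by real_asymp

locale rw = prob_space M for M :: "'a measure" +
  fixes X :: "nat \<Rightarrow> 'a \<Rightarrow> int" and p :: real
  assumes p0: "0 < p" and p1: "p < 1" and ph: "p \<noteq> 1 / 2"
    and Xm[measurable]: "\<And>i. X i \<in> measurable M (count_space UNIV)"
    and ind: "indep_vars (\<lambda>_. count_space UNIV) X UNIV"
    and P1: "\<And>i. measure M {\<omega> \<in> space M. X i \<omega> = 1} = p"
    and Pm1: "\<And>i. measure M {\<omega> \<in> space M. X i \<omega> = -1} = 1 - p"
begin

definition "mu = 2 * p - 1"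
definition "eps = \<bar>mu\<bar> / 2"

lemma mu_pos: "0 < \<bar>mu\<bar>" "\<bar>mu\<bar> < 1"
  using p0 p1 ph unfolding mu_def by auto

lemma AE_pm: "AE \<omega> in M. X i \<omega> = 1 \<or> X i \<omega> = -1"
proof -
  have "prob ({\<omega> \<in> space M. X i \<omega> = 1} \<union> {\<omega> \<in> space M. X i \<omega> = -1}) = 1"
    by (subst finite_measure_Union) (auto simp: P1 Pm1)
  from AE_prob_1[OF this] show ?thesis by auto
qed

lemma exp_X: "expectation (\<lambda>\<omega>. real_of_int (X i \<omega>)) = mu"
proof -
  have "expectation (\<lambda>\<omega>. real_of_int (X i \<omega>)) =
        expectation (\<lambda>\<omega>. 2 * indicator {\<omega> \<in> space M. X i \<omega> = 1} \<omega> - 1)"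
    by (rule integral_cong_AE) (use AE_pm[of i] in \<open>auto elim!: AE_mp\<close>)
  also have "\<dots> = 2 * p - 1"
    by (subst Bochner_Integration.integral_diff)
       (auto simp: P1 prob_space emeasure_eq_measure intro!: integrable_real_indicator)
  finally show ?thesis by (simp add: mu_def)
qed

lemma hoeff:
  assumes j: "j \<ge> 2"
  shows "prob {\<omega> \<in> space M. \<bar>real_of_int (walk X j \<omega>) - mu * (j - 1)\<bar> \<ge> eps * (j - 1)}
         \<le> 2 * exp (- (eps\<^sup>2 * (j - 1) / 2))"
proof -
  let ?Y = "\<lambda>i \<omega>. real_of_int (X i \<omega>)"
  interpret H: Hoeffding_ineq M "{1..<j}" ?Y "\<lambda>_. -1" "\<lambda>_. 1" "\<Sum>i\<in>{1..<j}. expectation (?Y i)"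
  proof unfold_locales
    show "indep_vars (\<lambda>_. borel) ?Y {1..<j}"
      by (rule indep_vars_compose2[where X=X and M'="\<lambda>_. count_space UNIV"])
         (auto intro: indep_vars_subset[OF ind])
    fix i show "AE x in M. ?Y i x \<in> {-1..1}"
      using AE_pm[of i] by (auto elim!: AE_mp)
  qed auto
  have s: "(\<Sum>i\<in>{1..<j}. expectation (?Y i)) = mu * (j - 1)"
    using j by (simp add: exp_X of_nat_diff)
  have w: "\<And>\<omega>. real_of_int (walk X j \<omega>) = (\<Sum>i\<in>{1..<j}. ?Y i \<omega>)"
    by (simp add: walk_def)
  have s4: "(\<Sum>i\<in>{1..<j}. (1 - (-1::real))\<^sup>2) = 4 * (j - 1)"
    using j by (simp add: of_nat_diff)
  have "prob {\<omega> \<in> space M. \<bar>(\<Sum>i\<in>{1..<j}. ?Y i \<omega>) - mu * (j - 1)\<bar> \<ge> eps * (j - 1)}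
     \<le> 2 * exp (-2 * (eps * (j - 1))\<^sup>2 / (\<Sum>i\<in>{1..<j}. (1 - (-1::real))\<^sup>2))"
    using H.Hoeffding_ineq_abs_ge[of "eps * (j - 1)"] j mu_pos unfolding s eps_def
    by (simp add: s4)
  also have "-2 * (eps * (j - 1))\<^sup>2 / (\<Sum>i\<in>{1..<j}. (1 - (-1::real))\<^sup>2) = - (eps\<^sup>2 * (j - 1) / 2)"
    using j unfolding s4 by (simp add: power2_eq_square field_simps)
  finally show ?thesis unfolding w .
qed

lemma Y_meas[measurable]: "(\<lambda>\<omega>. real_of_int (X i \<omega>)) \<in> borel_measurable M"
  by (rule measurable_compose[OF Xm]) simp

lemma walkr_meas[measurable]: "(\<lambda>\<omega>. real_of_int (walk X j \<omega>)) \<in> borel_measurable M"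
  unfolding walk_def of_int_sum by measurable

lemma walk_meas[measurable]: "walk X j \<in> measurable M (count_space UNIV)"
proof (subst measurable_count_space_eq2_countable, safe)
  fix a :: int
  have "walk X j -` {a} \<inter> space M = {\<omega> \<in> space M. real_of_int (walk X j \<omega>) = real_of_int a}"
    by auto
  also have "\<dots> \<in> sets M" by measurable
  finally show "walk X j -` {a} \<inter> space M \<in> sets M" .
qed auto

definition "Bad N = {\<omega> \<in> space M. \<exists>j\<in>{N div 4 + 1..N}.
   \<bar>real_of_int (walk X j \<omega>) - mu * (j - 1)\<bar> \<ge> eps * (j - 1)}"

lemma Bad_sets[measurable]: "Bad N \<in> sets M"
  unfolding Bad_def by measurable

lemma prob_Bad:
  assumes N: "N \<ge> 8"
  shows "prob (Bad N) \<le> 2 * N * exp (- (eps\<^sup>2 * (real N - 4) / 8))"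
proof -
  let ?E = "\<lambda>j. {\<omega> \<in> space M. \<bar>real_of_int (walk X j \<omega>) - mu * (j - 1)\<bar> \<ge> eps * (j - 1)}"
  have "Bad N = (\<Union>j\<in>{N div 4 + 1..N}. ?E j)" unfolding Bad_def by auto
  hence "prob (Bad N) \<le> (\<Sum>j\<in>{N div 4 + 1..N}. prob (?E j))"
  proof -
    assume eq: "Bad N = (\<Union>j\<in>{N div 4 + 1..N}. ?E j)"
    have "?E ` {N div 4 + 1..N} \<subseteq> sets M"
    proof safe
      fix j show "?E j \<in> sets M" by measurable
    qed
    from finite_measure_subadditive_finite[OF _ this] show ?thesis unfolding eq by simp
  qed
  also have "\<dots> \<le> (\<Sum>j\<in>{N div 4 + 1..N}. 2 * exp (- (eps\<^sup>2 * (real N - 4) / 8)))"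
  proof (rule sum_mono)
    fix j assume j: "j \<in> {N div 4 + 1..N}"
    have j2: "j \<ge> 2" using j N by auto
    have "real N - 4 \<le> 4 * (real j - 1)" using j by auto
    hence "eps\<^sup>2 * (real N - 4) \<le> eps\<^sup>2 * (4 * (real j - 1))"
      by (rule mult_left_mono) auto
    hence "eps\<^sup>2 * (real N - 4) / 8 \<le> eps\<^sup>2 * (real j - 1) / 2"
      by (simp add: field_simps)
    hence "2 * exp (- (eps\<^sup>2 * (real j - 1) / 2)) \<le> 2 * exp (- (eps\<^sup>2 * (real N - 4) / 8))"
      by simp
    moreover have "prob (?E j) \<le> 2 * exp (- (eps\<^sup>2 * (real j - 1) / 2))"
      using hoeff[OF j2] j2 by (simp add: of_nat_diff)
    ultimately show "prob (?E j) \<le> 2 * exp (- (eps\<^sup>2 * (real N - 4) / 8))"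
      by linarith
  qed
  also have "\<dots> \<le> N * (2 * exp (- (eps\<^sup>2 * (real N - 4) / 8)))"
    by simp
  finally show ?thesis by simp
qed

definition "C = nat \<lceil>16 / \<bar>mu\<bar>\<rceil>"
definition "B = 2 * C"

lemma C_prop: "\<bar>mu\<bar> * real C \<ge> 16" "C \<ge> 1" "B \<ge> 2"
proof -
  have "real C \<ge> 16 / \<bar>mu\<bar>" unfolding C_def by linarith
  thus "\<bar>mu\<bar> * real C \<ge> 16" using mu_pos by (simp add: field_simps)
  moreover have "16 / \<bar>mu\<bar> > 0" using mu_pos by simp
  ultimately show "C \<ge> 1" unfolding C_def by linarith
  thus "B \<ge> 2" unfolding B_def by simp
qed

definition fB :: "int \<Rightarrow> real" where
  "fB x = (if \<exists>k. int B ^ (2*k) \<le> \<bar>x\<bar> \<and> \<bar>x\<bar> < int B ^ (2*k+1) then 1 else 0)"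

lemma fB_bounded: "bounded (range fB)"
  unfolding bounded_iff fB_def by (intro exI[of _ 1]) auto

lemma fB_meas[measurable]: "(\<lambda>\<omega>. fB (walk X j \<omega>)) \<in> borel_measurable M"
  by (rule measurable_compose[OF walk_meas]) simp

lemma emp_meas[measurable]: "empirical_avg fB X N \<in> borel_measurable M"
  unfolding empirical_avg_def by measurable

lemma fB_odd:
  assumes "int B ^ (2*k+1) \<le> \<bar>x\<bar>" "\<bar>x\<bar> < int B ^ (2*k+2)"
  shows "fB x = 0"
proof -
  have B1: "(1::int) < int B" using C_prop by simp
  have "\<not> (int B ^ (2*k') \<le> \<bar>x\<bar> \<and> \<bar>x\<bar> < int B ^ (2*k'+1))" for k'
  proof
    assume h: "int B ^ (2*k') \<le> \<bar>x\<bar> \<and> \<bar>x\<bar> < int B ^ (2*k'+1)"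
    have "int B ^ (2*k+1) < int B ^ (2*k'+1)" using h assms by linarith
    hence "2*k+1 < 2*k'+1" using power_strict_increasing_iff[OF B1] by blast
    moreover have "int B ^ (2*k') < int B ^ (2*k+2)" using h assms by linarith
    hence "2*k' < 2*k+2" using power_strict_increasing_iff[OF B1] by blast
    ultimately show False by presburger
  qed
  thus ?thesis unfolding fB_def by auto
qed

lemma fB_even:
  assumes "int B ^ (2*k) \<le> \<bar>x\<bar>" "\<bar>x\<bar> < int B ^ (2*k+1)"
  shows "fB x = 1"
  using assms unfolding fB_def by auto


lemma aux_lin: "(a::real) \<le> A + d \<Longrightarrow> d < A/2 \<Longrightarrow> A \<le> t \<Longrightarrow> 0 < t \<Longrightarrow> a < 2*t"
  by linarith

lemma in_block:
  assumes \<omega>: "\<omega> \<in> space M" "\<omega> \<notin> Bad N" and N: "N = C * B ^ m" "N \<ge> 8"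
    and j: "j \<in> {N div 4 + 1..N}"
  shows "int B ^ m \<le> \<bar>walk X j \<omega>\<bar> \<and> \<bar>walk X j \<omega>\<bar> < int B ^ (m + 1)"
proof -
  define s where "s = real_of_int (walk X j \<omega>)"
  have lt: "\<bar>s - mu * (real j - 1)\<bar> < eps * (real j - 1)"
    using \<omega> j unfolding Bad_def s_def by (auto simp: of_nat_diff not_le)
  have jN: "real N - 4 \<le> 4 * (real j - 1)" "real j \<le> real N" using j by auto
  have f1: "\<bar>mu * (real j - 1)\<bar> = \<bar>mu\<bar> * (real j - 1)" using j
    by (auto simp: abs_mult)
  have f2: "\<bar>mu\<bar> * (real j - 1) \<le> real j - 1"
    using mu_pos j by (intro mult_left_le_one_le) auto
  have f3: "\<bar>s\<bar> \<ge> \<bar>mu * (real j - 1)\<bar> - \<bar>s - mu * (real j - 1)\<bar>"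
    "\<bar>s\<bar> \<le> \<bar>mu * (real j - 1)\<bar> + \<bar>s - mu * (real j - 1)\<bar>" by linarith+
  have lo: "\<bar>s\<bar> > eps * (real j - 1)" and hi: "\<bar>s\<bar> < 2 * (real j - 1)"
  proof -
    have e: "eps * (real j - 1) = (\<bar>mu\<bar> * (real j - 1)) / 2" by (simp add: eps_def)
    have "real j - 1 > 0" using j N by auto
    show "\<bar>s\<bar> > eps * (real j - 1)" "\<bar>s\<bar> < 2 * (real j - 1)"
      using f1 f2 f3 lt e \<open>real j - 1 > 0\<close> apply linarith
      using aux_lin[of "\<bar>s\<bar>" "\<bar>mu\<bar> * (real j - 1)" "\<bar>s - mu * (real j - 1)\<bar>" "real j - 1"]
        f1 f2 f3 lt e \<open>real j - 1 > 0\<close> by linarith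
  qed
  have "eps * (real N - 4) \<le> eps * (4 * (real j - 1))"
    using jN mu_pos unfolding eps_def by (intro mult_left_mono) auto
  moreover have "eps * (4 * (real j - 1)) = 4 * (eps * (real j - 1))" by simp
  moreover have "eps * (real N - 4) = \<bar>mu\<bar> * (real N - 4) / 2" by (simp add: eps_def)
  ultimately have lo2: "\<bar>s\<bar> > \<bar>mu\<bar> * (real N - 4) / 8" using lo by linarith
  have "\<bar>mu\<bar> * real N = (\<bar>mu\<bar> * real C) * real B ^ m" using N by simp
  also have "\<dots> \<ge> 16 * real B ^ m" using C_prop by (intro mult_right_mono) auto
  finally have "\<bar>mu\<bar> * real N \<ge> 16 * real B ^ m" .
  moreover have "real B ^ m \<ge> 1" using C_prop by simp
  ultimately have "\<bar>mu\<bar> * (real N - 4) / 8 \<ge> real B ^ m" using mu_pos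
    by (simp add: algebra_simps)
  with lo2 have L: "\<bar>s\<bar> > real B ^ m" by linarith
  have eqB: "2 * real N = real B ^ (m+1)" using N unfolding B_def by simp
  have "2 * (real j - 1) \<le> 2 * real N" using jN(2) by simp
  with hi have "\<bar>s\<bar> < 2 * real N" by (rule less_le_trans)
  hence H: "\<bar>s\<bar> < real B ^ (m+1)" by (simp only: eqB)
  from L H show ?thesis unfolding s_def
    by (metis of_int_abs of_int_less_iff of_int_of_nat_eq of_int_power order_less_imp_le)
qed


lemma split_sum: fixes N :: nat shows "(\<Sum>j=1..N. g j) = (\<Sum>j=1..N div 4. g j) + (\<Sum>j=N div 4 + 1..N. (g j :: real))"
proof -
  have "{1..N} = {1..N div 4} \<union> {N div 4 + 1..N}" by auto
  thus ?thesis by (simp add: sum.union_disjoint)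
qed

lemma emp_even:
  assumes \<omega>: "\<omega> \<in> space M" "\<omega> \<notin> Bad N" and N: "N = C * B ^ (2*k)" "N \<ge> 8"
  shows "empirical_avg fB X N \<omega> \<ge> 3/4"
proof -
  have "(\<Sum>j=N div 4 + 1..N. fB (walk X j \<omega>)) = (\<Sum>j=N div 4 + 1..N. 1)"
  proof (rule sum.cong[OF refl])
    fix j assume j: "j \<in> {N div 4 + 1..N}"
    from in_block[OF \<omega> N j] show "fB (walk X j \<omega>) = 1"
      by (intro fB_even[of k]) simp_all
  qed
  moreover have "(\<Sum>j=1..N div 4. fB (walk X j \<omega>)) \<ge> 0"
    by (intro sum_nonneg) (auto simp: fB_def)
  ultimately have "(\<Sum>j=1..N. fB (walk X j \<omega>)) \<ge> real (N - N div 4)"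
    using split_sum[of "\<lambda>j. fB (walk X j \<omega>)" N] by simp
  moreover have "real (N - N div 4) \<ge> 3/4 * real N"
  proof -
    have "4 * (N div 4) \<le> N" by simp
    hence "4 * real (N div 4) \<le> real N" by linarith
    thus ?thesis by (simp add: of_nat_diff)
  qed
  ultimately have "(\<Sum>j=1..N. fB (walk X j \<omega>)) \<ge> 3/4 * real N" by linarith
  moreover have "real N > 0" using N(2) by simp
  ultimately show ?thesis unfolding empirical_avg_def by (simp add: field_simps)
qed

lemma emp_odd:
  assumes \<omega>: "\<omega> \<in> space M" "\<omega> \<notin> Bad N" and N: "N = C * B ^ (2*k+1)" "N \<ge> 8"
  shows "empirical_avg fB X N \<omega> \<le> 1/4"
proof -
  have "(\<Sum>j=N div 4 + 1..N. fB (walk X j \<omega>)) = 0"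
  proof (rule sum.neutral, rule ballI)
    fix j assume j: "j \<in> {N div 4 + 1..N}"
    have e: "2*k+1+1 = 2*k+2" by simp
    from in_block[OF \<omega> N j] show "fB (walk X j \<omega>) = 0"
      unfolding e by (intro fB_odd[of k]) simp_all
  qed
  moreover have "(\<Sum>j=1..N div 4. fB (walk X j \<omega>)) \<le> (\<Sum>j=1..N div 4. 1)"
    by (intro sum_mono) (auto simp: fB_def)
  ultimately have "(\<Sum>j=1..N. fB (walk X j \<omega>)) \<le> real (N div 4)"
    using split_sum[of "\<lambda>j. fB (walk X j \<omega>)" N] by simp
  moreover have "4 * real (N div 4) \<le> real N"
  proof -
    have "4 * (N div 4) \<le> N" by simp
    thus ?thesis by linarith
  qed
  ultimately have "(\<Sum>j=1..N. fB (walk X j \<omega>)) \<le> 1/4 * real N" by linarith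
  moreover have "real N > 0" using N(2) by simp
  ultimately show ?thesis unfolding empirical_avg_def by (simp add: field_simps)
qed


definition "g N = 2 * real N * exp (- (eps\<^sup>2 * (real N - 4) / 8))"

lemma PU_le:
  assumes N: "N = C * B ^ (2*k)" "N \<ge> 8"
  shows "prob {\<omega> \<in> space M. empirical_avg fB X N \<omega> \<in> {..<1/2}} \<le> g N"
proof -
  have "{\<omega> \<in> space M. empirical_avg fB X N \<omega> \<in> {..<1/2}} \<subseteq> Bad N"
  proof (rule subsetI)
    fix \<omega> assume "\<omega> \<in> {\<omega> \<in> space M. empirical_avg fB X N \<omega> \<in> {..<1/2}}"
    hence "\<omega> \<in> space M" "empirical_avg fB X N \<omega> < 1/2" by auto
    moreover have "\<omega> \<notin> Bad N \<Longrightarrow> empirical_avg fB X N \<omega> \<ge> 3/4"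
      using emp_even[OF \<open>\<omega> \<in> space M\<close> _ N] by blast
    ultimately show "\<omega> \<in> Bad N" by force
  qed
  hence "prob {\<omega> \<in> space M. empirical_avg fB X N \<omega> \<in> {..<1/2}} \<le> prob (Bad N)"
    by (intro finite_measure_mono) auto
  also have "\<dots> \<le> g N" using prob_Bad[OF N(2)] unfolding g_def by simp
  finally show ?thesis .
qed

lemma PF_ge:
  assumes N: "N = C * B ^ (2*k+1)" "N \<ge> 8"
  shows "prob {\<omega> \<in> space M. empirical_avg fB X N \<omega> \<in> {..1/4}} \<ge> 1 - g N"
proof -
  have "space M - Bad N \<subseteq> {\<omega> \<in> space M. empirical_avg fB X N \<omega> \<in> {..1/4}}"
    using emp_odd[OF _ _ N] by auto
  hence "prob (space M - Bad N) \<le> prob {\<omega> \<in> space M. empirical_avg fB X N \<omega> \<in> {..1/4}}"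
    by (intro finite_measure_mono) auto
  moreover have "prob (space M - Bad N) = 1 - prob (Bad N)" by (rule prob_compl) simp
  moreover have "prob (Bad N) \<le> g N" using prob_Bad[OF N(2)] unfolding g_def by simp
  ultimately show ?thesis by linarith
qed

lemma eps_pos: "eps > 0" using mu_pos unfolding eps_def by simp

lemma ev_all: "eventually (\<lambda>n::nat. ln (2 * real n) / real n + eps\<^sup>2 / real n \<le> eps\<^sup>2 / 16
   \<and> g n \<le> 1/2 \<and> ln 2 / real n \<le> eps\<^sup>2 / 32 \<and> n \<ge> 8) at_top"
proof -
  have e: "eps\<^sup>2 > 0" using eps_pos by simp
  have 1: "eventually (\<lambda>n::nat. ln (2 * real n) / real n + eps\<^sup>2 / real n \<le> eps\<^sup>2 / 16) at_top"
    using e by real_asymp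
  have 2: "eventually (\<lambda>n::nat. 2 * real n * exp (- (eps\<^sup>2 * (real n - 4) / 8)) \<le> 1/2) at_top"
    using e by real_asymp
  have 3: "eventually (\<lambda>n::nat. ln 2 / real n \<le> eps\<^sup>2 / 32) at_top"
    using e by real_asymp
  have 4: "eventually (\<lambda>n::nat. n \<ge> 8) at_top" by (rule eventually_ge_at_top)
  show ?thesis using 1 2 3 4 unfolding g_def by eventually_elim auto
qed

lemma big_k: "\<exists>k. C * B ^ (2*k) \<ge> N0"
proof -
  have "N0 < 2 ^ N0" by (rule less_exp)
  also have "(2::nat) ^ N0 \<le> B ^ N0" using C_prop by (intro power_mono) auto
  also have "B ^ N0 \<le> B ^ (2 * N0)" using C_prop by (intro power_increasing) auto
  also have "\<dots> \<le> C * B ^ (2 * N0)" using C_prop by simp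
  finally show ?thesis by (intro exI[of _ N0]) simp
qed


lemma freq_a: "frequently (\<lambda>n. ereal (1 / real n) * eln (prob {\<omega> \<in> space M. empirical_avg fB X n \<omega> \<in> {..<1/2}})
   \<le> ereal (- (eps\<^sup>2 / 16))) sequentially"
  unfolding frequently_sequentially
proof
  fix N0
  obtain n0 where n0: "\<And>n. n \<ge> n0 \<Longrightarrow> ln (2 * real n) / real n + eps\<^sup>2 / real n \<le> eps\<^sup>2 / 16
   \<and> g n \<le> 1/2 \<and> ln 2 / real n \<le> eps\<^sup>2 / 32 \<and> n \<ge> 8"
    using ev_all unfolding eventually_sequentially by blast
  obtain k where k: "C * B ^ (2*k) \<ge> max N0 n0" using big_k by blast
  define n where "n = C * B ^ (2*k)"
  have nn: "n \<ge> N0" "n \<ge> n0" using k unfolding n_def by auto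
  note h = n0[OF nn(2)]
  have n8: "n \<ge> 8" using h by simp
  have npos: "real n > 0" using n8 by simp
  define q where "q = prob {\<omega> \<in> space M. empirical_avg fB X n \<omega> \<in> {..<1/2}}"
  have qg: "q \<le> g n" unfolding q_def using PU_le[OF n_def n8] .
  have "ereal (1 / real n) * eln q \<le> ereal (- (eps\<^sup>2 / 16))"
  proof (cases "q = 0")
    case True thus ?thesis using npos by (simp add: eln_def)
  next
    case False
    hence qpos: "q > 0" unfolding q_def by (simp add: zero_less_measure_iff)
    have gpos: "g n > 0" unfolding g_def using npos by simp
    have "ln q \<le> ln (g n)" using qpos qg by simp
    also have "ln (g n) = ln (2 * real n) - eps\<^sup>2 * (real n - 4) / 8"
      unfolding g_def using npos by (simp add: ln_mult)
    finally have "ln q / real n \<le> (ln (2 * real n) - eps\<^sup>2 * (real n - 4) / 8) / real n"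
      using npos by (simp add: divide_right_mono)
    also have "\<dots> = ln (2 * real n) / real n + eps\<^sup>2 / (2 * real n) - eps\<^sup>2 / 8"
      using npos by (simp add: field_simps)
    also have "eps\<^sup>2 / (2 * real n) \<le> eps\<^sup>2 / real n"
      using npos by (simp add: divide_left_mono frac_le)
    hence "ln (2 * real n) / real n + eps\<^sup>2 / (2 * real n) - eps\<^sup>2 / 8 \<le> - (eps\<^sup>2 / 16)"
      using h by linarith
    finally have "ln q / real n \<le> - (eps\<^sup>2 / 16)" .
    thus ?thesis using qpos False by (simp add: eln_def)
  qed
  thus "\<exists>n\<ge>N0. ereal (1 / real n) * eln (prob {\<omega> \<in> space M. empirical_avg fB X n \<omega> \<in> {..<1/2}})
   \<le> ereal (- (eps\<^sup>2 / 16))" using nn unfolding q_def by blast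
qed

lemma freq_b: "frequently (\<lambda>n. ereal (1 / real n) * eln (prob {\<omega> \<in> space M. empirical_avg fB X n \<omega> \<in> {..1/4}})
   \<ge> ereal (- (eps\<^sup>2 / 32))) sequentially"
  unfolding frequently_sequentially
proof
  fix N0
  obtain n0 where n0: "\<And>n. n \<ge> n0 \<Longrightarrow> ln (2 * real n) / real n + eps\<^sup>2 / real n \<le> eps\<^sup>2 / 16
   \<and> g n \<le> 1/2 \<and> ln 2 / real n \<le> eps\<^sup>2 / 32 \<and> n \<ge> 8"
    using ev_all unfolding eventually_sequentially by blast
  obtain k where k: "C * B ^ (2*k) \<ge> max N0 n0" using big_k by blast
  define n where "n = C * B ^ (2*k+1)"
  have "C * B ^ (2*k) \<le> n" unfolding n_def using C_prop by (intro mult_left_mono power_increasing) auto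
  hence "max N0 n0 \<le> n" using k by linarith
  hence nn: "n \<ge> N0" "n \<ge> n0" by auto
  note h = n0[OF nn(2)]
  have n8: "n \<ge> 8" using h by simp
  have npos: "real n > 0" using n8 by simp
  define q where "q = prob {\<omega> \<in> space M. empirical_avg fB X n \<omega> \<in> {..1/4}}"
  have qg: "q \<ge> 1 - g n" unfolding q_def using PF_ge[OF n_def n8] .
  hence q2: "q \<ge> 1/2" using h by linarith
  hence "ln q \<ge> ln (1/2)" by simp
  hence "ln q \<ge> - ln 2" by (simp add: ln_div)
  hence "ln q / real n \<ge> - ln 2 / real n" using npos by (intro divide_right_mono) auto
  hence "ln q / real n \<ge> - (eps\<^sup>2 / 32)" using h by simp
  hence "ereal (1 / real n) * eln q \<ge> ereal (- (eps\<^sup>2 / 32))" using q2 by (simp add: eln_def)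
  thus "\<exists>n\<ge>N0. ereal (1 / real n) * eln (prob {\<omega> \<in> space M. empirical_avg fB X n \<omega> \<in> {..1/4}})
   \<ge> ereal (- (eps\<^sup>2 / 32))" using nn unfolding q_def by blast
qed


lemma no_LDP: "\<not> satisfies_LDP M (empirical_avg fB X)"
proof
  assume "satisfies_LDP M (empirical_avg fB X)"
  then obtain J :: "real \<Rightarrow> ereal" where
    lo: "\<And>U. open U \<Longrightarrow> - (INF x\<in>U. J x) \<le>
            liminf (\<lambda>n. ereal (1 / real n) * eln (measure M {\<omega> \<in> space M. empirical_avg fB X n \<omega> \<in> U}))" and
    up: "\<And>F. closed F \<Longrightarrow>
          limsup (\<lambda>n. ereal (1 / real n) * eln (measure M {\<omega> \<in> space M. empirical_avg fB X n \<omega> \<in> F}))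
            \<le> - (INF x\<in>F. J x)"
    unfolding satisfies_LDP_def by blast
  define a where "a = (\<lambda>n. ereal (1 / real n) * eln (measure M {\<omega> \<in> space M. empirical_avg fB X n \<omega> \<in> {..<1/2::real}}))"
  define b where "b = (\<lambda>n. ereal (1 / real n) * eln (measure M {\<omega> \<in> space M. empirical_avg fB X n \<omega> \<in> {..1/4::real}}))"
  define c where "c = eps\<^sup>2 / 16"
  have c: "c > 0" unfolding c_def using eps_pos by simp
  have la: "liminf a \<le> ereal (- c)"
  proof (rule ccontr)
    assume "\<not> ?thesis"
    hence "ereal (- c) < liminf a" by simp
    from less_LiminfD[OF this] obtain N1 where N1: "\<And>n. n \<ge> N1 \<Longrightarrow> ereal (- c) < a n"
      unfolding eventually_sequentially by blast
    from freq_a obtain n where "n \<ge> N1" "a n \<le> ereal (- c)"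
      unfolding frequently_sequentially a_def c_def by blast
    with N1 show False by (meson not_le)
  qed
  have lb: "limsup b \<ge> ereal (- (c/2))"
  proof (rule ccontr)
    assume "\<not> ?thesis"
    hence "limsup b < ereal (- (c/2))" by simp
    from Limsup_lessD[OF this] obtain N1 where N1: "\<And>n. n \<ge> N1 \<Longrightarrow> b n < ereal (- (c/2))"
      unfolding eventually_sequentially by blast
    from freq_b obtain n where "n \<ge> N1" "b n \<ge> ereal (- (c/2))"
      unfolding frequently_sequentially b_def c_def by auto
    with N1 show False by (meson not_le)
  qed
  have "-(INF x\<in>{..<1/2::real}. J x) \<le> liminf a" unfolding a_def by (rule lo) simp
  moreover have "limsup b \<le> -(INF x\<in>{..1/4::real}. J x)" unfolding b_def by (rule up) simp
  moreover have "(INF x\<in>{..<1/2::real}. J x) \<le> (INF x\<in>{..1/4::real}. J x)"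
    by (rule INF_superset_mono) auto
  hence "-(INF x\<in>{..1/4::real}. J x) \<le> -(INF x\<in>{..<1/2::real}. J x)" by simp
  ultimately have "ereal (- (c/2)) \<le> ereal (- c)" using la lb by (meson order.trans)
  thus False using c by simp
qed

end

theorem proposition1p3:
  fixes M :: "'a measure" and X :: "nat \<Rightarrow> 'a \<Rightarrow> int" and p :: real
  assumes "prob_space M"
    and "0 < p" and "p < 1" and "p \<noteq> 1 / 2"
    and "\<And>i. X i \<in> measurable M (count_space UNIV)"
    and "prob_space.indep_vars M (\<lambda>_. count_space UNIV) X UNIV"
    and "\<And>i. measure M {\<omega> \<in> space M. X i \<omega> = 1} = p"
    and "\<And>i. measure M {\<omega> \<in> space M. X i \<omega> = -1} = 1 - p"
  shows "\<exists>f :: int \<Rightarrow> real. bounded (range f) \<and>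
           \<not> satisfies_LDP M (empirical_avg f X)"
proof -
  interpret rw M X p
    using assms unfolding rw_def rw_axioms_def by blast
  show ?thesis using fB_bounded no_LDP by blast
qed

end
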